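(* Let $N\geq 10^{100000}$ be a real number, let $f_N(x)=\dfrac{\log N+\log(x-1)}{\log x}$ for real $x>1$, and let $g_{k,N}(x)=(-1)^k f_N^{(k)}(x)$. Define polynomials $P_{1,1}(t)=1$, $P_{2,2}(t)=t+2$, $P_{3,3}(t)=2t^2+6t+6$, $P_{4,4}(t)=6t^3+22t^2+36t+24$, $P_{5,5}(t)=24t^4+100t^3+210t^2+240t+120$, $P_{6,6}(t)=120t^5+548t^4+1350t^3+2040t^2+1800t+720$ (equivalently $P_{1,1}=1$ and $P_{k+1,k+1}(t)=(kt+k+1)P_{k,k}(t)-tP_{k,k}'(t)$). Then for $1\leq k\leq 6$ and $x\geq 10^5$, $$\frac{0.999999\,P_{k,k}(\log x)\log N}{x^k\log^{k+1}x}<g_{k,N}(x)<\frac{P_{k,k}(\log x)\log N}{x^k\log^{k+1}x}.$$ Moreover, for $2\leq k\leq 6$ and $x\geq 10^5$, $$\frac{(k-1)!\log N}{x^k\log^2 x}<g_{k,N}(x)<\frac{\tau_k\log N}{x^k\log^2 x},$$ where $\tau_2=1.17372$, $\tau_3=2.56643$, $\tau_4=8.19823$, $\tau_5=34.4344$, $\tau_6=179.227$; and for $x\geq 10^5$, $$\frac{0.999999\log N}{x\log^2 x}<g_{1,N}(x)<\frac{\log N}{x\log^2 x}.$$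
   Context: $f_N^{(k)}$ denotes the $k$-th derivative of $f_N$ with respect to $x$; $\log$ is the natural logarithm. *)

theory Defs
  imports "HOL-Analysis.Analysis"
begin

definition fN :: "real \<Rightarrow> real \<Rightarrow> real" where
  "fN N x = (ln N + ln (x - 1)) / ln x"

definition gN :: "nat \<Rightarrow> real \<Rightarrow> real \<Rightarrow> real" where
  "gN k N x = (-1) ^ k * (deriv ^^ k) (fN N) x"

definition Pkk :: "nat \<Rightarrow> real \<Rightarrow> real" where
  "Pkk k t = (if k = 1 then 1
     else if k = 2 then t + 2
     else if k = 3 then 2*t^2 + 6*t + 6
     else if k = 4 then 6*t^3 + 22*t^2 + 36*t + 24
     else if k = 5 then 24*t^4 + 100*t^3 + 210*t^2 + 240*t + 120
     else if k = 6 then 120*t^5 + 548*t^4 + 1350*t^3 + 2040*t^2 + 1800*t + 720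
     else 0)"

definition tau :: "nat \<Rightarrow> real" where
  "tau k = (if k = 2 then 1.17372
     else if k = 3 then 2.56643
     else if k = 4 then 8.19823
     else if k = 5 then 34.4344
     else if k = 6 then 179.227
     else 0)"

end

theory Submission
  imports Defs "HOL-Analysis.Harmonic_Numbers"
begin

definition Q :: "nat \<Rightarrow> real \<Rightarrow> real" where
  "Q k t = (if k = 0 then 1 else Pkk k t)"

definition H :: "nat \<Rightarrow> real \<Rightarrow> real" where
  "H k x = Q k (ln x) / (x ^ k * ln x ^ (k + 1))"

lemma H_deriv:
  assumes "x > 1" "k < 6"
  shows "(H k has_real_derivative - H (Suc k) x) (at x)"
proof -
  have x0: "x > 0" and l0: "ln x > 0" using assms by auto
  have "k = 0 \<or> k = 1 \<or> k = 2 \<or> k = 3 \<or> k = 4 \<or> k = 5" using assms by auto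
  then show ?thesis
  proof (elim disjE)
    assume "k = 0" then show ?thesis unfolding H_def Q_def Pkk_def using x0 l0
      by (auto intro!: derivative_eq_intros simp: field_simps power2_eq_square)
  next
    assume "k = 1" then show ?thesis unfolding H_def Q_def Pkk_def using x0 l0
      apply (auto intro!: derivative_eq_intros)
      apply (simp add: field_simps power2_eq_square eval_nat_numeral)
      done
  next
    assume "k = 2" then show ?thesis unfolding H_def Q_def Pkk_def using x0 l0
      apply (auto intro!: derivative_eq_intros)
      apply (simp add: field_simps eval_nat_numeral)
      done
  next
    assume "k = 3" then show ?thesis unfolding H_def Q_def Pkk_def using x0 l0
      apply (auto intro!: derivative_eq_intros)
      apply (simp add: field_simps eval_nat_numeral)
      done
  next
    assume "k = 4" then show ?thesis unfolding H_def Q_def Pkk_def using x0 l0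
      apply (auto intro!: derivative_eq_intros)
      apply (simp add: field_simps eval_nat_numeral)
      done
  next
    assume "k = 5" then show ?thesis unfolding H_def Q_def Pkk_def using x0 l0
      apply (auto intro!: derivative_eq_intros)
      apply (simp add: field_simps eval_nat_numeral)
      done
  qed
qed

definition G :: "real \<Rightarrow> nat \<Rightarrow> real \<Rightarrow> real" where
  "G L k x = (L + ln (x - 1)) * H k x
     - (\<Sum>j=1..k. real (k choose j) * fact (j - 1) / (x - 1) ^ j * H (k - j) x)"

lemma H_deriv':
  assumes "x > 1" "k < 6" "D = - H (Suc k) x"
  shows "(H k has_real_derivative D) (at x within S)"
  using H_deriv[OF assms(1,2)] assms(3) has_field_derivative_at_within by blast

lemma G_deriv:
  assumes "x > 1" "k < 6"
  shows "(G L k has_real_derivative - G L (Suc k) x) (at x)"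
proof -
  have x0: "x - 1 > 0" using assms by auto
  obtain y where y: "x = y + 1" "y > 0" using x0 by (metis add.commute diff_add_cancel diff_gt_0_iff_gt)
  have "k = 0 \<or> k = 1 \<or> k = 2 \<or> k = 3 \<or> k = 4 \<or> k = 5" using assms by auto
  then show ?thesis
  proof (elim disjE)
    assume "k = 0" then show ?thesis unfolding G_def using x0 assms
      apply (simp add: eval_nat_numeral)
      apply (rule derivative_eq_intros H_deriv' refl | simp)+
      apply ((use y in \<open>simp add: field_simps\<close>)?)
      done
  next
    assume "k = 1" then show ?thesis unfolding G_def using x0 assms
      apply (simp add: eval_nat_numeral)
      apply (rule derivative_eq_intros H_deriv' refl | simp)+
      apply ((use y in \<open>simp add: field_simps\<close>)?)
      done
  next
    assume "k = 5" then show ?thesis unfolding G_def using x0 assms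
      apply (simp add: eval_nat_numeral)
      apply (rule derivative_eq_intros H_deriv' refl | simp)+
      apply ((use y in \<open>simp add: field_simps\<close>)?)
      done
  next
    assume "k = 2" then show ?thesis unfolding G_def using x0 assms
      apply (simp add: eval_nat_numeral)
      apply (rule derivative_eq_intros H_deriv' refl | simp)+
      apply ((use y in \<open>simp add: field_simps\<close>)?)
      done
  next
    assume "k = 3" then show ?thesis unfolding G_def using x0 assms
      apply (simp add: eval_nat_numeral)
      apply (rule derivative_eq_intros H_deriv' refl | simp)+
      apply ((use y in \<open>simp add: field_simps\<close>)?)
      done
  next
    assume "k = 4" then show ?thesis unfolding G_def using x0 assms
      apply (simp add: eval_nat_numeral)
      apply (rule derivative_eq_intros H_deriv' refl | simp)+
      apply ((use y in \<open>simp add: field_simps\<close>)?)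
      done
  qed
qed

lemma deriv_iter:
  assumes "k \<le> 6"
  shows "\<forall>x>1. (deriv ^^ k) (fN N) x = (-1) ^ k * G (ln N) k x"
  using assms
proof (induction k)
  case 0
  then show ?case by (simp add: G_def H_def Q_def fN_def)
next
  case (Suc k)
  then have IH: "\<forall>x>1. (deriv ^^ k) (fN N) x = (-1) ^ k * G (ln N) k x" by simp
  show ?case
  proof (intro allI impI)
    fix x :: real assume x: "x > 1"
    have ev: "eventually (\<lambda>y. (deriv ^^ k) (fN N) y = (-1) ^ k * G (ln N) k y) (nhds x)"
      using eventually_nhds_in_open[of "{1<..}" x] x IH
      by (auto elim!: eventually_mono)
    have "(deriv ^^ Suc k) (fN N) x = deriv ((deriv ^^ k) (fN N)) x" by simp
    also have "\<dots> = deriv (\<lambda>y. (-1) ^ k * G (ln N) k y) x"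
      by (rule deriv_cong_ev[OF ev refl])
    also have "\<dots> = (-1) ^ k * (- G (ln N) (Suc k) x)"
      using Suc.prems x
      by (intro DERIV_imp_deriv DERIV_cmult G_deriv) auto
    finally show "(deriv ^^ Suc k) (fN N) x = (-1) ^ Suc k * G (ln N) (Suc k) x" by simp
  qed
qed

lemma gN_eq: "k \<le> 6 \<Longrightarrow> x > 1 \<Longrightarrow> gN k N x = G (ln N) k x"
  using deriv_iter[of k N] by (simp add: gN_def)

lemma neg_ln_ge:
  assumes "0 \<le> y" "y < 1"
  shows "(\<Sum>n<m. y ^ Suc n / real (Suc n)) \<le> - ln (1 - y)"
proof -
  have ls: "ln (1 - y) = (\<Sum>n. (-1)^n * (1 / real (n + 1)) * ((1 - y) - 1)^(Suc n))"
    using assms by (intro ln_series) auto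
  have eq: "(\<lambda>n. (-1)^n * (1 / real (n + 1)) * ((1 - y) - 1)^(Suc n)) = (\<lambda>n. - (y ^ Suc n / real (Suc n)))"
  proof
    fix n
    have "((1 - y) - 1)^(Suc n) = (-1)^(Suc n) * y ^ Suc n" by (simp flip: power_mult_distrib)
    then show "(-1)^n * (1 / real (n + 1)) * ((1 - y) - 1)^(Suc n) = - (y ^ Suc n / real (Suc n))"
      by (simp add: power_add field_simps flip: power_mult_distrib)
  qed
  have sm: "summable (\<lambda>n. y ^ Suc n / real (Suc n))"
  proof (rule summable_comparison_test[of _ "\<lambda>n. y ^ Suc n"])
    have "norm (y ^ Suc n / real (Suc n)) \<le> y ^ Suc n" for n
    proof -
      have p: "0 \<le> y ^ Suc n" using assms by simp
      have "y ^ Suc n / real (Suc n) \<le> y ^ Suc n / 1"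
        using p by (intro divide_left_mono) auto
      then show ?thesis using p by simp
    qed
    then show "\<exists>N. \<forall>n\<ge>N. norm (y ^ Suc n / real (Suc n)) \<le> y ^ Suc n" by blast
    show "summable (\<lambda>n. y ^ Suc n)" using assms by (simp add: summable_geometric_iff)
  qed
  have "- ln (1 - y) = (\<Sum>n. y ^ Suc n / real (Suc n))"
    using ls eq suminf_minus[OF sm] by simp
  moreover have "(\<Sum>n<m. y ^ Suc n / real (Suc n)) \<le> (\<Sum>n. y ^ Suc n / real (Suc n))"
    using sm assms by (intro sum_le_suminf) auto
  ultimately show ?thesis by simp
qed

lemma ln10_lower: "2.302584 \<le> ln (10::real)"
proof -
  have a: "ln (10::real) = - ln (1 - 1/10) - 4 * ln (1 - 1/9) - 6 * ln (1 - 1/4)"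
  proof -
    have "ln (10::real) = ln ((10/9) * (9/8)^4 * (4/3)^6)" by (simp add: power_divide)
    also have "\<dots> = ln ((10/9) * (9/8)^4) + ln ((4/3::real)^6)"
      by (rule ln_mult_pos) auto
    also have "\<dots> = ln (10/9) + ln ((9/8::real)^4) + ln ((4/3::real)^6)"
      by (subst ln_mult_pos) auto
    also have "\<dots> = ln (10/9) + 4 * ln (9/8) + 6 * ln (4/3)"
      by (simp add: ln_realpow)
    also have "\<dots> = - ln (1 - 1/10) - 4 * ln (1 - 1/9) - 6 * ln (1 - 1/4)"
      by (simp add: ln_div)
    finally show ?thesis .
  qed
  have b1: "(\<Sum>n<6. (1/10::real) ^ Suc n / real (Suc n)) \<le> - ln (1 - 1/10)" by (rule neg_ln_ge) auto
  have b2: "(\<Sum>n<7. (1/9::real) ^ Suc n / real (Suc n)) \<le> - ln (1 - 1/9)" by (rule neg_ln_ge) auto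
  have b3: "(\<Sum>n<14. (1/4::real) ^ Suc n / real (Suc n)) \<le> - ln (1 - 1/4)" by (rule neg_ln_ge) auto
  have c1: "(\<Sum>n<6. (1/10::real) ^ Suc n / real (Suc n)) = 
      (\<Sum>n<6. (1/10::real) ^ Suc n / real (Suc n))" ..
  show ?thesis using a b1 b2 b3 by (simp add: lessThan_nat_numeral power_divide)
qed

definition Bp :: "nat \<Rightarrow> real \<Rightarrow> real" where
  "Bp k t = Q k t + (\<Sum>j=1..k. real (k choose j) * fact j * t ^ j * Q (k - j) t)"

definition B :: "nat \<Rightarrow> real \<Rightarrow> real" where
  "B k x = H k x + (\<Sum>j=1..k. real (k choose j) * fact j / x ^ j * H (k - j) x)"

lemma cases6: "1 \<le> (k::nat) \<Longrightarrow> k \<le> 6 \<Longrightarrow> k = 1 \<or> k = 2 \<or> k = 3 \<or> k = 4 \<or> k = 5 \<or> k = 6"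
  by auto

lemma H_ident:
  assumes "x > 1" "1 \<le> k" "k \<le> 6"
  shows "ln x * H k x = (\<Sum>j=1..k. real (k choose j) * fact (j - 1) / x ^ j * H (k - j) x)"
proof -
  have x0: "x > 0" and l0: "ln x > 0" using assms by auto
  from cases6[OF assms(2,3)] show ?thesis
    using x0 l0 by (elim disjE) (simp_all add: H_def Q_def Pkk_def eval_nat_numeral field_simps)
qed

lemma B_eq:
  assumes "x > 1" "k \<le> 6"
  shows "B k x = Bp k (ln x) / (x ^ k * ln x ^ (k + 1))"
proof -
  have x0: "x > 0" and l0: "ln x > 0" using assms by auto
  have "k = 0 \<or> k = 1 \<or> k = 2 \<or> k = 3 \<or> k = 4 \<or> k = 5 \<or> k = 6" using assms by auto
  then show ?thesis
    using x0 l0 by (elim disjE) (simp_all add: B_def Bp_def H_def Q_def Pkk_def eval_nat_numeral field_simps)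
qed

lemma Q_pos: "k \<le> 6 \<Longrightarrow> t > 0 \<Longrightarrow> Q k t > 0"
  apply (subgoal_tac "k = 0 \<or> k = 1 \<or> k = 2 \<or> k = 3 \<or> k = 4 \<or> k = 5 \<or> k = 6")
   apply (elim disjE; simp add: Q_def Pkk_def add_pos_pos)
  by auto

lemma H_pos: "k \<le> 6 \<Longrightarrow> x > 1 \<Longrightarrow> H k x > 0"
  unfolding H_def using Q_pos[of k "ln x"] by simp

definition E :: "nat \<Rightarrow> real \<Rightarrow> real" where
  "E k x = (ln x - ln (x - 1)) * H k x
     + (\<Sum>j=1..k. real (k choose j) * fact (j - 1) * (1 / (x - 1) ^ j - 1 / x ^ j) * H (k - j) x)"

lemma G_decomp:
  assumes "x > 1" "1 \<le> k" "k \<le> 6"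
  shows "G L k x = L * H k x - E k x"
proof -
  have x0: "x > 0" "x - 1 > 0" using assms by auto
  have s: "(\<Sum>j=1..k. real (k choose j) * fact (j - 1) * (1 / (x - 1) ^ j - 1 / x ^ j) * H (k - j) x)
     = (\<Sum>j=1..k. real (k choose j) * fact (j - 1) / (x - 1) ^ j * H (k - j) x)
       - (\<Sum>j=1..k. real (k choose j) * fact (j - 1) / x ^ j * H (k - j) x)"
    unfolding sum_subtractf[symmetric] by (rule sum.cong) (auto simp: field_simps)
  show ?thesis
    unfolding G_def E_def s H_ident[OF assms, symmetric] by (simp add: algebra_simps)
qed

lemma delta_bound:
  assumes "x \<ge> 2 * real j" "x \<ge> 2"
  shows "1 / (x - 1) ^ j - 1 / x ^ j \<le> 2 * real j / x ^ (j + 1)"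
proof -
  have x0: "x > 0" "x - 1 > 0" using assms by auto
  define a where "a = real j / x"
  have a0: "0 \<le> a" "a \<le> 1/2" using assms x0 by (auto simp: a_def field_simps)
  have b: "1 + real j * (- 1 / x) \<le> (1 + - 1 / x) ^ j"
    using x0 assms by (intro Bernoulli_inequality) (auto simp: field_simps)
  hence b': "1 - a \<le> (1 - 1 / x) ^ j" by (simp add: a_def)
  have eq: "(x - 1) ^ j = x ^ j * (1 - 1 / x) ^ j"
    using x0 by (simp add: power_mult_distrib[symmetric] field_simps)
  have pos: "0 < x ^ j * (1 - a)" using a0 x0 by simp
  have le1: "x ^ j * (1 - a) \<le> (x - 1) ^ j"
    unfolding eq using b' x0 by (intro mult_left_mono) auto
  have "1 / (x - 1) ^ j \<le> 1 / (x ^ j * (1 - a))"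
    using pos le1 by (intro divide_left_mono) auto
  also have "\<dots> \<le> (1 + 2 * a) / x ^ j"
  proof -
    have "a * (1 - 2 * a) \<ge> 0" using a0 by (intro mult_nonneg_nonneg) auto
    hence "1 \<le> (1 + 2 * a) * (1 - a)" by (simp add: algebra_simps)
    hence "1 / (1 - a) \<le> 1 + 2 * a" using a0 by (simp add: divide_le_eq)
    hence "1 / (1 - a) / x ^ j \<le> (1 + 2 * a) / x ^ j" using x0 by (intro divide_right_mono) auto
    thus ?thesis by (simp add: mult.commute)
  qed
  finally have "1 / (x - 1) ^ j \<le> (1 + 2 * a) / x ^ j" .
  moreover have "(1 + 2 * a) / x ^ j - 1 / x ^ j = 2 * real j / x ^ (j + 1)"
    using x0 by (simp add: a_def field_simps)
  ultimately show ?thesis by linarith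
qed

lemma lnx_diff:
  fixes x :: real
  assumes "x \<ge> 2"
  shows "0 < ln x - ln (x - 1)" "ln x - ln (x - 1) \<le> 2 / x"
proof -
  have x0: "x > 0" "x - 1 > 0" using assms by auto
  show "0 < ln x - ln (x - 1)" using x0 by simp
  have "ln x - ln (x - 1) = ln (x / (x - 1))" using x0 by (simp add: ln_divide_pos)
  also have "\<dots> \<le> x / (x - 1) - 1" using x0 by (intro ln_le_minus_one) auto
  also have "\<dots> \<le> 2 / x" using x0 assms by (simp add: field_simps)
  finally show "ln x - ln (x - 1) \<le> 2 / x" .
qed

lemma E_pos:
  assumes "x \<ge> 2" "k \<le> 6"
  shows "0 < E k x"
proof -
  have x0: "x > 0" "x - 1 > 0" using assms by auto
  have "0 < (ln x - ln (x - 1)) * H k x" using lnx_diff[OF assms(1)] H_pos[OF assms(2)] assms by simp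
  moreover have "0 \<le> (\<Sum>j=1..k. real (k choose j) * fact (j - 1) * (1 / (x - 1) ^ j - 1 / x ^ j) * H (k - j) x)"
  proof (intro sum_nonneg mult_nonneg_nonneg)
    fix j assume "j \<in> {1..k}"
    show "0 \<le> H (k - j) x" using H_pos[of "k - j" x, OF order.trans[OF diff_le_self assms(2)]] assms by simp
    have "(x - 1) ^ j \<le> x ^ j" using x0 by (intro power_mono) auto
    hence "1 / x ^ j \<le> 1 / (x - 1) ^ j" using x0 by (intro divide_left_mono) auto
    thus "0 \<le> 1 / (x - 1) ^ j - 1 / x ^ j" by simp
  qed auto
  ultimately show ?thesis unfolding E_def by linarith
qed

lemma E_le:
  assumes "x \<ge> 12" "k \<le> 6"
  shows "E k x \<le> 2 / x * B k x"
proof -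
  have x0: "x > 0" "x - 1 > 0" using assms by auto
  have t1: "(ln x - ln (x - 1)) * H k x \<le> 2 / x * H k x"
    using lnx_diff(2)[of x] H_pos[OF assms(2), of x] assms by (intro mult_right_mono) auto
  have t2: "(\<Sum>j=1..k. real (k choose j) * fact (j - 1) * (1 / (x - 1) ^ j - 1 / x ^ j) * H (k - j) x)
      \<le> (\<Sum>j=1..k. 2 / x * (real (k choose j) * fact j / x ^ j * H (k - j) x))"
  proof (rule sum_mono)
    fix j assume j: "j \<in> {1..k}"
    have hp: "0 \<le> H (k - j) x" using H_pos[of "k - j" x, OF order.trans[OF diff_le_self assms(2)]] assms by simp
    have c0: "0 \<le> real (k choose j) * fact (j - 1)" by simp
    have d: "1 / (x - 1) ^ j - 1 / x ^ j \<le> 2 * real j / x ^ (j + 1)"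
      using j assms by (intro delta_bound) auto
    have "real (k choose j) * fact (j - 1) * (1 / (x - 1) ^ j - 1 / x ^ j) * H (k - j) x
        \<le> real (k choose j) * fact (j - 1) * (2 * real j / x ^ (j + 1)) * H (k - j) x"
      using d hp c0 by (intro mult_right_mono mult_left_mono) auto
    also have "\<dots> = 2 / x * (real (k choose j) * fact j / x ^ j * H (k - j) x)"
    proof -
      have "fact j = real j * fact (j - 1)" using j by (cases j) auto
      then show ?thesis using x0 by (simp add: field_simps)
    qed
    finally show "real (k choose j) * fact (j - 1) * (1 / (x - 1) ^ j - 1 / x ^ j) * H (k - j) x
        \<le> 2 / x * (real (k choose j) * fact j / x ^ j * H (k - j) x)" .
  qed
  show ?thesis unfolding E_def B_def using t1 t2
    by (simp add: distrib_left sum_distrib_left)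
qed

lemma pw: "c \<le> t \<Longrightarrow> 0 \<le> (c::real) \<Longrightarrow> c * t^n \<le> t^(Suc n)"
  by (simp add: mult_right_mono mult.commute)

lemma P1_1:
  assumes t: "(t::real) \<ge> 11"
  shows "2 * Bp 1 t < 161 * (t^2 * Q 1 t)"
proof -
  have e1: "Bp 1 t = 1 + 1 * t" by (simp add: Bp_def Q_def Pkk_def eval_nat_numeral algebra_simps)
  have e2: "t^2 * Q 1 t = 1 * t^2" by (simp add: Q_def Pkk_def eval_nat_numeral algebra_simps)
  have p0: "11 \<le> t" using pw[of "11" t 0] t by (simp add: eval_nat_numeral)
  have p1: "11 * t \<le> t^2" using pw[of "11" t 1] t by (simp add: eval_nat_numeral)
  have p2: "11 * t^2 \<le> t^3" using pw[of "11" t 2] t by (simp add: eval_nat_numeral)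
  note pp = p0 p1 p2
  show ?thesis using e1 e2 pp by linarith
qed

lemma P1_2:
  assumes t: "(t::real) \<ge> 11"
  shows "2 * Bp 2 t < 161 * (t^2 * Q 2 t)"
proof -
  have e1: "Bp 2 t = 2 + 3 * t + 2 * t^2" by (simp add: Bp_def Q_def Pkk_def eval_nat_numeral algebra_simps)
  have e2: "t^2 * Q 2 t = 2 * t^2 + 1 * t^3" by (simp add: Q_def Pkk_def eval_nat_numeral algebra_simps)
  have p0: "11 \<le> t" using pw[of "11" t 0] t by (simp add: eval_nat_numeral)
  have p1: "11 * t \<le> t^2" using pw[of "11" t 1] t by (simp add: eval_nat_numeral)
  have p2: "11 * t^2 \<le> t^3" using pw[of "11" t 2] t by (simp add: eval_nat_numeral)
  have p3: "11 * t^3 \<le> t^4" using pw[of "11" t 3] t by (simp add: eval_nat_numeral)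
  note pp = p0 p1 p2 p3
  show ?thesis using e1 e2 pp by linarith
qed

lemma P2_2:
  assumes t: "(t::real) \<ge> 11"
  shows "2 * Bp 2 t < 160000000 * (t^2 * (Q 2 t - fact (2 - 1) * t^(2 - 1)))"
proof -
  have e1: "Bp 2 t = 2 + 3 * t + 2 * t^2" by (simp add: Bp_def Q_def Pkk_def eval_nat_numeral algebra_simps)
  have e2: "t^2 * (Q 2 t - fact (2 - 1) * t^(2 - 1)) = 2 * t^2" by (simp add: Q_def Pkk_def eval_nat_numeral algebra_simps)
  have p0: "11 \<le> t" using pw[of "11" t 0] t by (simp add: eval_nat_numeral)
  have p1: "11 * t \<le> t^2" using pw[of "11" t 1] t by (simp add: eval_nat_numeral)
  have p2: "11 * t^2 \<le> t^3" using pw[of "11" t 2] t by (simp add: eval_nat_numeral)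
  have p3: "11 * t^3 \<le> t^4" using pw[of "11" t 3] t by (simp add: eval_nat_numeral)
  note pp = p0 p1 p2 p3
  show ?thesis using e1 e2 pp by linarith
qed

lemma P3_2:
  assumes t: "(t::real) \<ge> 11.51292"
  shows "Q 2 t \<le> tau 2 * t^(2 - 1)"
proof -
  have t': "(1151292/100000) \<le> t" using t by simp
  have e1: "Q 2 t = 2 + 1 * t" by (simp add: Q_def Pkk_def)
  have e2: "tau 2 * t^(2 - 1) = (29343/25000) * t" by (simp add: tau_def)
  have p0: "(1151292/100000) \<le> t" using pw[of "(1151292/100000)" t 0] t' by (simp add: eval_nat_numeral)
  have p1: "(1151292/100000) * t \<le> t^2" using pw[of "(1151292/100000)" t 1] t' by (simp add: eval_nat_numeral)
  note pp = p0 p1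
  show ?thesis using e1 e2 pp by linarith
qed

lemma P1_3:
  assumes t: "(t::real) \<ge> 11"
  shows "2 * Bp 3 t < 161 * (t^2 * Q 3 t)"
proof -
  have e1: "Bp 3 t = 6 + 12 * t + 11 * t^2 + 6 * t^3" by (simp add: Bp_def Q_def Pkk_def eval_nat_numeral algebra_simps)
  have e2: "t^2 * Q 3 t = 6 * t^2 + 6 * t^3 + 2 * t^4" by (simp add: Q_def Pkk_def eval_nat_numeral algebra_simps)
  have p0: "11 \<le> t" using pw[of "11" t 0] t by (simp add: eval_nat_numeral)
  have p1: "11 * t \<le> t^2" using pw[of "11" t 1] t by (simp add: eval_nat_numeral)
  have p2: "11 * t^2 \<le> t^3" using pw[of "11" t 2] t by (simp add: eval_nat_numeral)
  have p3: "11 * t^3 \<le> t^4" using pw[of "11" t 3] t by (simp add: eval_nat_numeral)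
  have p4: "11 * t^4 \<le> t^5" using pw[of "11" t 4] t by (simp add: eval_nat_numeral)
  note pp = p0 p1 p2 p3 p4
  show ?thesis using e1 e2 pp by linarith
qed

lemma P2_3:
  assumes t: "(t::real) \<ge> 11"
  shows "2 * Bp 3 t < 160000000 * (t^2 * (Q 3 t - fact (3 - 1) * t^(3 - 1)))"
proof -
  have e1: "Bp 3 t = 6 + 12 * t + 11 * t^2 + 6 * t^3" by (simp add: Bp_def Q_def Pkk_def eval_nat_numeral algebra_simps)
  have e2: "t^2 * (Q 3 t - fact (3 - 1) * t^(3 - 1)) = 6 * t^2 + 6 * t^3" by (simp add: Q_def Pkk_def eval_nat_numeral algebra_simps)
  have p0: "11 \<le> t" using pw[of "11" t 0] t by (simp add: eval_nat_numeral)
  have p1: "11 * t \<le> t^2" using pw[of "11" t 1] t by (simp add: eval_nat_numeral)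
  have p2: "11 * t^2 \<le> t^3" using pw[of "11" t 2] t by (simp add: eval_nat_numeral)
  have p3: "11 * t^3 \<le> t^4" using pw[of "11" t 3] t by (simp add: eval_nat_numeral)
  have p4: "11 * t^4 \<le> t^5" using pw[of "11" t 4] t by (simp add: eval_nat_numeral)
  note pp = p0 p1 p2 p3 p4
  show ?thesis using e1 e2 pp by linarith
qed

lemma P3_3:
  assumes t: "(t::real) \<ge> 11.51292"
  shows "Q 3 t \<le> tau 3 * t^(3 - 1)"
proof -
  have t': "(1151292/100000) \<le> t" using t by simp
  have e1: "Q 3 t = 6 + 6 * t + 2 * t^2" by (simp add: Q_def Pkk_def)
  have e2: "tau 3 * t^(3 - 1) = (256643/100000) * t^2" by (simp add: tau_def)
  have p0: "(1151292/100000) \<le> t" using pw[of "(1151292/100000)" t 0] t' by (simp add: eval_nat_numeral)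
  have p1: "(1151292/100000) * t \<le> t^2" using pw[of "(1151292/100000)" t 1] t' by (simp add: eval_nat_numeral)
  have p2: "(1151292/100000) * t^2 \<le> t^3" using pw[of "(1151292/100000)" t 2] t' by (simp add: eval_nat_numeral)
  note pp = p0 p1 p2
  show ?thesis using e1 e2 pp by linarith
qed

lemma P1_4:
  assumes t: "(t::real) \<ge> 11"
  shows "2 * Bp 4 t < 161 * (t^2 * Q 4 t)"
proof -
  have e1: "Bp 4 t = 24 + 60 * t + 70 * t^2 + 50 * t^3 + 24 * t^4" by (simp add: Bp_def Q_def Pkk_def eval_nat_numeral algebra_simps)
  have e2: "t^2 * Q 4 t = 24 * t^2 + 36 * t^3 + 22 * t^4 + 6 * t^5" by (simp add: Q_def Pkk_def eval_nat_numeral algebra_simps)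
  have p0: "11 \<le> t" using pw[of "11" t 0] t by (simp add: eval_nat_numeral)
  have p1: "11 * t \<le> t^2" using pw[of "11" t 1] t by (simp add: eval_nat_numeral)
  have p2: "11 * t^2 \<le> t^3" using pw[of "11" t 2] t by (simp add: eval_nat_numeral)
  have p3: "11 * t^3 \<le> t^4" using pw[of "11" t 3] t by (simp add: eval_nat_numeral)
  have p4: "11 * t^4 \<le> t^5" using pw[of "11" t 4] t by (simp add: eval_nat_numeral)
  have p5: "11 * t^5 \<le> t^6" using pw[of "11" t 5] t by (simp add: eval_nat_numeral)
  note pp = p0 p1 p2 p3 p4 p5
  show ?thesis using e1 e2 pp by linarith
qed

lemma P2_4:
  assumes t: "(t::real) \<ge> 11"
  shows "2 * Bp 4 t < 160000000 * (t^2 * (Q 4 t - fact (4 - 1) * t^(4 - 1)))"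
proof -
  have e1: "Bp 4 t = 24 + 60 * t + 70 * t^2 + 50 * t^3 + 24 * t^4" by (simp add: Bp_def Q_def Pkk_def eval_nat_numeral algebra_simps)
  have e2: "t^2 * (Q 4 t - fact (4 - 1) * t^(4 - 1)) = 24 * t^2 + 36 * t^3 + 22 * t^4" by (simp add: Q_def Pkk_def eval_nat_numeral algebra_simps)
  have p0: "11 \<le> t" using pw[of "11" t 0] t by (simp add: eval_nat_numeral)
  have p1: "11 * t \<le> t^2" using pw[of "11" t 1] t by (simp add: eval_nat_numeral)
  have p2: "11 * t^2 \<le> t^3" using pw[of "11" t 2] t by (simp add: eval_nat_numeral)
  have p3: "11 * t^3 \<le> t^4" using pw[of "11" t 3] t by (simp add: eval_nat_numeral)
  have p4: "11 * t^4 \<le> t^5" using pw[of "11" t 4] t by (simp add: eval_nat_numeral)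
  have p5: "11 * t^5 \<le> t^6" using pw[of "11" t 5] t by (simp add: eval_nat_numeral)
  note pp = p0 p1 p2 p3 p4 p5
  show ?thesis using e1 e2 pp by linarith
qed

lemma P3_4:
  assumes t: "(t::real) \<ge> 11.51292"
  shows "Q 4 t \<le> tau 4 * t^(4 - 1)"
proof -
  have t': "(1151292/100000) \<le> t" using t by simp
  have e1: "Q 4 t = 24 + 36 * t + 22 * t^2 + 6 * t^3" by (simp add: Q_def Pkk_def)
  have e2: "tau 4 * t^(4 - 1) = (819823/100000) * t^3" by (simp add: tau_def)
  have p0: "(1151292/100000) \<le> t" using pw[of "(1151292/100000)" t 0] t' by (simp add: eval_nat_numeral)
  have p1: "(1151292/100000) * t \<le> t^2" using pw[of "(1151292/100000)" t 1] t' by (simp add: eval_nat_numeral)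
  have p2: "(1151292/100000) * t^2 \<le> t^3" using pw[of "(1151292/100000)" t 2] t' by (simp add: eval_nat_numeral)
  have p3: "(1151292/100000) * t^3 \<le> t^4" using pw[of "(1151292/100000)" t 3] t' by (simp add: eval_nat_numeral)
  note pp = p0 p1 p2 p3
  show ?thesis using e1 e2 pp by linarith
qed

lemma P1_5:
  assumes t: "(t::real) \<ge> 11"
  shows "2 * Bp 5 t < 161 * (t^2 * Q 5 t)"
proof -
  have e1: "Bp 5 t = 120 + 360 * t + 510 * t^2 + 450 * t^3 + 274 * t^4 + 120 * t^5" by (simp add: Bp_def Q_def Pkk_def eval_nat_numeral algebra_simps)
  have e2: "t^2 * Q 5 t = 120 * t^2 + 240 * t^3 + 210 * t^4 + 100 * t^5 + 24 * t^6" by (simp add: Q_def Pkk_def eval_nat_numeral algebra_simps)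
  have p0: "11 \<le> t" using pw[of "11" t 0] t by (simp add: eval_nat_numeral)
  have p1: "11 * t \<le> t^2" using pw[of "11" t 1] t by (simp add: eval_nat_numeral)
  have p2: "11 * t^2 \<le> t^3" using pw[of "11" t 2] t by (simp add: eval_nat_numeral)
  have p3: "11 * t^3 \<le> t^4" using pw[of "11" t 3] t by (simp add: eval_nat_numeral)
  have p4: "11 * t^4 \<le> t^5" using pw[of "11" t 4] t by (simp add: eval_nat_numeral)
  have p5: "11 * t^5 \<le> t^6" using pw[of "11" t 5] t by (simp add: eval_nat_numeral)
  have p6: "11 * t^6 \<le> t^7" using pw[of "11" t 6] t by (simp add: eval_nat_numeral)
  note pp = p0 p1 p2 p3 p4 p5 p6
  show ?thesis using e1 e2 pp by linarith
qed

lemma P2_5: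
  assumes t: "(t::real) \<ge> 11"
  shows "2 * Bp 5 t < 160000000 * (t^2 * (Q 5 t - fact (5 - 1) * t^(5 - 1)))"
proof -
  have e1: "Bp 5 t = 120 + 360 * t + 510 * t^2 + 450 * t^3 + 274 * t^4 + 120 * t^5" by (simp add: Bp_def Q_def Pkk_def eval_nat_numeral algebra_simps)
  have e2: "t^2 * (Q 5 t - fact (5 - 1) * t^(5 - 1)) = 120 * t^2 + 240 * t^3 + 210 * t^4 + 100 * t^5" by (simp add: Q_def Pkk_def eval_nat_numeral algebra_simps)
  have p0: "11 \<le> t" using pw[of "11" t 0] t by (simp add: eval_nat_numeral)
  have p1: "11 * t \<le> t^2" using pw[of "11" t 1] t by (simp add: eval_nat_numeral)
  have p2: "11 * t^2 \<le> t^3" using pw[of "11" t 2] t by (simp add: eval_nat_numeral)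
  have p3: "11 * t^3 \<le> t^4" using pw[of "11" t 3] t by (simp add: eval_nat_numeral)
  have p4: "11 * t^4 \<le> t^5" using pw[of "11" t 4] t by (simp add: eval_nat_numeral)
  have p5: "11 * t^5 \<le> t^6" using pw[of "11" t 5] t by (simp add: eval_nat_numeral)
  have p6: "11 * t^6 \<le> t^7" using pw[of "11" t 6] t by (simp add: eval_nat_numeral)
  note pp = p0 p1 p2 p3 p4 p5 p6
  show ?thesis using e1 e2 pp by linarith
qed

lemma P3_5:
  assumes t: "(t::real) \<ge> 11.51292"
  shows "Q 5 t \<le> tau 5 * t^(5 - 1)"
proof -
  have t': "(1151292/100000) \<le> t" using t by simp
  have e1: "Q 5 t = 120 + 240 * t + 210 * t^2 + 100 * t^3 + 24 * t^4" by (simp add: Q_def Pkk_def)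
  have e2: "tau 5 * t^(5 - 1) = (43043/1250) * t^4" by (simp add: tau_def)
  have p0: "(1151292/100000) \<le> t" using pw[of "(1151292/100000)" t 0] t' by (simp add: eval_nat_numeral)
  have p1: "(1151292/100000) * t \<le> t^2" using pw[of "(1151292/100000)" t 1] t' by (simp add: eval_nat_numeral)
  have p2: "(1151292/100000) * t^2 \<le> t^3" using pw[of "(1151292/100000)" t 2] t' by (simp add: eval_nat_numeral)
  have p3: "(1151292/100000) * t^3 \<le> t^4" using pw[of "(1151292/100000)" t 3] t' by (simp add: eval_nat_numeral)
  have p4: "(1151292/100000) * t^4 \<le> t^5" using pw[of "(1151292/100000)" t 4] t' by (simp add: eval_nat_numeral)
  note pp = p0 p1 p2 p3 p4
  show ?thesis using e1 e2 pp by linarith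
qed

lemma P1_6:
  assumes t: "(t::real) \<ge> 11"
  shows "2 * Bp 6 t < 161 * (t^2 * Q 6 t)"
proof -
  have e1: "Bp 6 t = 720 + 2520 * t + 4200 * t^2 + 4410 * t^3 + 3248 * t^4 + 1764 * t^5 + 720 * t^6" by (simp add: Bp_def Q_def Pkk_def eval_nat_numeral algebra_simps)
  have e2: "t^2 * Q 6 t = 720 * t^2 + 1800 * t^3 + 2040 * t^4 + 1350 * t^5 + 548 * t^6 + 120 * t^7" by (simp add: Q_def Pkk_def eval_nat_numeral algebra_simps)
  have p0: "11 \<le> t" using pw[of "11" t 0] t by (simp add: eval_nat_numeral)
  have p1: "11 * t \<le> t^2" using pw[of "11" t 1] t by (simp add: eval_nat_numeral)
  have p2: "11 * t^2 \<le> t^3" using pw[of "11" t 2] t by (simp add: eval_nat_numeral)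
  have p3: "11 * t^3 \<le> t^4" using pw[of "11" t 3] t by (simp add: eval_nat_numeral)
  have p4: "11 * t^4 \<le> t^5" using pw[of "11" t 4] t by (simp add: eval_nat_numeral)
  have p5: "11 * t^5 \<le> t^6" using pw[of "11" t 5] t by (simp add: eval_nat_numeral)
  have p6: "11 * t^6 \<le> t^7" using pw[of "11" t 6] t by (simp add: eval_nat_numeral)
  have p7: "11 * t^7 \<le> t^8" using pw[of "11" t 7] t by (simp add: eval_nat_numeral)
  note pp = p0 p1 p2 p3 p4 p5 p6 p7
  show ?thesis using e1 e2 pp by linarith
qed

lemma P2_6:
  assumes t: "(t::real) \<ge> 11"
  shows "2 * Bp 6 t < 160000000 * (t^2 * (Q 6 t - fact (6 - 1) * t^(6 - 1)))"
proof -
  have e1: "Bp 6 t = 720 + 2520 * t + 4200 * t^2 + 4410 * t^3 + 3248 * t^4 + 1764 * t^5 + 720 * t^6" by (simp add: Bp_def Q_def Pkk_def eval_nat_numeral algebra_simps)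
  have e2: "t^2 * (Q 6 t - fact (6 - 1) * t^(6 - 1)) = 720 * t^2 + 1800 * t^3 + 2040 * t^4 + 1350 * t^5 + 548 * t^6" by (simp add: Q_def Pkk_def eval_nat_numeral algebra_simps)
  have p0: "11 \<le> t" using pw[of "11" t 0] t by (simp add: eval_nat_numeral)
  have p1: "11 * t \<le> t^2" using pw[of "11" t 1] t by (simp add: eval_nat_numeral)
  have p2: "11 * t^2 \<le> t^3" using pw[of "11" t 2] t by (simp add: eval_nat_numeral)
  have p3: "11 * t^3 \<le> t^4" using pw[of "11" t 3] t by (simp add: eval_nat_numeral)
  have p4: "11 * t^4 \<le> t^5" using pw[of "11" t 4] t by (simp add: eval_nat_numeral)
  have p5: "11 * t^5 \<le> t^6" using pw[of "11" t 5] t by (simp add: eval_nat_numeral)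
  have p6: "11 * t^6 \<le> t^7" using pw[of "11" t 6] t by (simp add: eval_nat_numeral)
  have p7: "11 * t^7 \<le> t^8" using pw[of "11" t 7] t by (simp add: eval_nat_numeral)
  note pp = p0 p1 p2 p3 p4 p5 p6 p7
  show ?thesis using e1 e2 pp by linarith
qed

lemma P3_6:
  assumes t: "(t::real) \<ge> 11.51292"
  shows "Q 6 t \<le> tau 6 * t^(6 - 1)"
proof -
  have t': "(1151292/100000) \<le> t" using t by simp
  have e1: "Q 6 t = 720 + 1800 * t + 2040 * t^2 + 1350 * t^3 + 548 * t^4 + 120 * t^5" by (simp add: Q_def Pkk_def)
  have e2: "tau 6 * t^(6 - 1) = (179227/1000) * t^5" by (simp add: tau_def)
  have p0: "(1151292/100000) \<le> t" using pw[of "(1151292/100000)" t 0] t' by (simp add: eval_nat_numeral)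
  have p1: "(1151292/100000) * t \<le> t^2" using pw[of "(1151292/100000)" t 1] t' by (simp add: eval_nat_numeral)
  have p2: "(1151292/100000) * t^2 \<le> t^3" using pw[of "(1151292/100000)" t 2] t' by (simp add: eval_nat_numeral)
  have p3: "(1151292/100000) * t^3 \<le> t^4" using pw[of "(1151292/100000)" t 3] t' by (simp add: eval_nat_numeral)
  have p4: "(1151292/100000) * t^4 \<le> t^5" using pw[of "(1151292/100000)" t 4] t' by (simp add: eval_nat_numeral)
  have p5: "(1151292/100000) * t^5 \<le> t^6" using pw[of "(1151292/100000)" t 5] t' by (simp add: eval_nat_numeral)
  note pp = p0 p1 p2 p3 p4 p5
  show ?thesis using e1 e2 pp by linarith
qed

lemma ln10_lower': "2302584/1000000 \<le> ln (10::real)"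
  using ln10_lower by simp

lemma ln10_upper: "ln (10::real) \<le> 23334/10000"
proof -
  have a: "ln ((5/4) * (2::real)^3) = ln (5/4) + ln (2^3)" by (rule ln_mult_pos) auto
  have b: "ln ((2::real)^3) = real 3 * ln 2" by (rule ln_realpow)
  have c: "(5/4) * (2::real)^3 = 10" by simp
  have e: "ln (10::real) = ln (5/4) + 3 * ln 2" using a b c by simp
  have "ln (5/4::real) \<le> 5/4 - 1" by (rule ln_le_minus_one) auto
  thus ?thesis using e ln2_le_25_over_36 by linarith
qed

lemma t_lower:
  assumes "x \<ge> (10::real) ^ 5"
  shows "ln x \<ge> 11.51292"
proof -
  have "ln ((10::real)^5) = real 5 * ln 10" by (rule ln_realpow)
  moreover have "ln ((10::real)^5) \<le> ln x" using assms by simp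
  ultimately have "1151292/100000 \<le> ln x" using ln10_lower' by linarith
  thus ?thesis by simp
qed

lemma x_ge_t2:
  assumes "x \<ge> (10::real) ^ 5"
  shows "x \<ge> 700 * (ln x)^2"
proof -
  define u where "u = x / 10^5"
  have u1: "u \<ge> 1" using assms by (simp add: u_def)
  define s where "s = sqrt u"
  have s1: "s \<ge> 1" using u1 by (simp add: s_def)
  have ss: "s^2 = u" using u1 by (simp add: s_def)
  define t0 where "t0 = ln ((10::real)^5)"
  have "t0 = real 5 * ln 10" unfolding t0_def by (rule ln_realpow)
  hence t0: "t0 = 5 * ln 10" by simp
  have t0b: "t0 \<le> 11667/1000" "t0 \<ge> 2" using t0 ln10_upper ln10_lower' by linarith+
  have xp: "x > 0" using assms by (smt (verit) zero_less_power)
  have "ln x = t0 + ln u" unfolding t0_def u_def using xp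
    by (simp add: ln_divide_pos)
  also have "ln u = 2 * ln s" using ss s1 by (metis ln_realpow of_nat_numeral)
  also have "ln s \<le> s - 1" using s1 by (intro ln_le_minus_one) auto
  hence "t0 + 2 * ln s \<le> t0 * s" using t0b s1
  proof -
    have "(t0 - 2) * (s - 1) \<ge> 0" using t0b s1 by simp
    thus ?thesis using \<open>ln s \<le> s - 1\<close> by (simp add: algebra_simps)
  qed
  finally have lt: "ln x \<le> t0 * s" .
  have ln0: "ln x \<ge> 0" using assms by simp
  have "(ln x)^2 \<le> (t0 * s)^2" using lt ln0 by (intro power_mono) auto
  also have "\<dots> = t0^2 * u" by (simp add: power_mult_distrib ss)
  also have "\<dots> \<le> (11667/1000)^2 * u" using t0b u1 by (intro mult_right_mono power_mono) auto
  finally have "(ln x)^2 \<le> (11667/1000)^2 * u" .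
  moreover have "(11667/1000::real)^2 * u \<le> 137 * u" using u1 by (intro mult_right_mono) (auto simp: power2_eq_square)
  ultimately have "(ln x)^2 \<le> 137 * (x / 100000)" by (simp add: u_def)
  thus ?thesis using assms by simp
qed

lemma L_lower:
  assumes "N \<ge> (10::real) ^ 100000"
  shows "ln N \<ge> 230258"
proof -
  have p: "0 < (10::real) ^ 100000" by (rule zero_less_power) simp
  have e: "ln ((10::real)^100000) = real 100000 * ln 10" by (rule ln_realpow)
  have "ln ((10::real)^100000) \<le> ln N"
    using ln_le_cancel_iff[OF p less_le_trans[OF p assms]] assms by blast
  hence "real 100000 * ln 10 \<le> ln N" using e by linarith
  hence "100000 * ln 10 \<le> ln N" by simp
  thus ?thesis using ln10_lower' by linarith
qed

lemma main_ab:
  assumes k: "1 \<le> k" "k \<le> 6" and x: "x \<ge> 10^5" and L: "L \<ge> 230258"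
    and P1: "2 * Bp k (ln x) < 161 * ((ln x)^2 * Q k (ln x))"
  shows "G L k x < L * H k x" "(1 - 1/1000000) * (L * H k x) < G L k x"
proof -
  have x12: "x \<ge> 12" using x by simp
  have xp: "x > 1" using x12 by simp
  have tp: "ln x > 0" using xp by simp
  have xt: "x \<ge> 700 * (ln x)^2" by (rule x_ge_t2[OF x])
  define D where "D = x^k * ln x^(k+1)"
  have Dp: "D > 0" using xp tp by (simp add: D_def)
  define q where "q = Q k (ln x)"
  define b where "b = Bp k (ln x)"
  have HQ: "H k x = q / D" by (simp add: H_def D_def q_def)
  have BB: "B k x = b / D" using B_eq[OF xp k(2)] by (simp add: D_def b_def)
  have Qp: "q > 0" using Q_pos[OF k(2) tp] by (simp add: q_def)
  have dec: "G L k x = L * H k x - E k x" by (rule G_decomp[OF xp k])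
  have Ep: "E k x > 0" using E_pos[of x k] x12 k by simp
  have Ele: "E k x \<le> 2 / x * B k x" using E_le[of x k] x12 k by simp
  show "G L k x < L * H k x" using dec Ep by linarith
  have a0: "161 * (ln x)^2 \<le> 23/100 * x" using xt by linarith
  have a1: "161 * ((ln x)^2 * q) \<le> 23/100 * x * q"
    using mult_right_mono[OF a0, of q] Qp by (simp add: algebra_simps)
  have a2: "23/100 * x * q \<le> L / 1000000 * x * q"
    using mult_right_mono[of "23/100" "L / 1000000" "x * q"] L Qp xp by (simp add: algebra_simps)
  have key: "2 * b < L / 1000000 * x * q" using P1 a1 a2 unfolding b_def q_def by linarith
  have "E k x \<le> 2 / x * (b / D)" using Ele BB by simp
  also have "\<dots> = (2 * b) / (x * D)" by (simp add: field_simps)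
  also have "\<dots> < (L / 1000000 * x * q) / (x * D)"
    using key xp Dp by (intro divide_strict_right_mono) auto
  also have "\<dots> = 1/1000000 * (L * H k x)" using xp Dp HQ by (simp add: field_simps)
  finally have "E k x < 1/1000000 * (L * H k x)" .
  then show "(1 - 1/1000000) * (L * H k x) < G L k x" using dec by (simp add: algebra_simps)
qed

lemma main_c:
  assumes k: "2 \<le> k" "k \<le> 6" and x: "x \<ge> 10^5" and L: "L \<ge> 230258"
    and P2: "2 * Bp k (ln x) < 160000000 * ((ln x)^2 * (Q k (ln x) - fact (k - 1) * (ln x)^(k - 1)))"
  shows "fact (k - 1) * L / (x ^ k * ln x ^ 2) < G L k x"
proof -
  have k1: "1 \<le> k" using k by simp
  have x12: "x \<ge> 12" using x by simp
  have xp: "x > 1" using x12 by simp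
  have tp: "ln x > 0" using xp by simp
  have xt: "x \<ge> 700 * (ln x)^2" by (rule x_ge_t2[OF x])
  define D where "D = x^k * ln x^(k+1)"
  have Dp: "D > 0" using xp tp by (simp add: D_def)
  define q where "q = Q k (ln x)"
  define b where "b = Bp k (ln x)"
  define r where "r = q - fact (k - 1) * (ln x)^(k - 1)"
  have HQ: "H k x = q / D" by (simp add: H_def D_def q_def)
  have BB: "B k x = b / D" using B_eq[OF xp k(2)] by (simp add: D_def b_def)
  have dec: "G L k x = L * H k x - E k x" by (rule G_decomp[OF xp k1 k(2)])
  have Ele: "E k x \<le> 2 / x * B k x" using E_le[of x k] x12 k by simp
  have Bpos: "B k x > 0"
  proof -
    have "0 \<le> (\<Sum>j=1..k. real (k choose j) * fact j / x ^ j * H (k - j) x)"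
      using H_pos[of _ x] xp k by (intro sum_nonneg mult_nonneg_nonneg divide_nonneg_nonneg) (auto intro: less_imp_le)
    thus ?thesis using H_pos[OF k(2) xp] unfolding B_def by linarith
  qed
  have bp: "b > 0" using Bpos BB Dp by (simp add: zero_less_divide_iff)
  have P2': "2 * b < 160000000 * ((ln x)^2 * r)" using P2 by (simp add: b_def r_def q_def)
  have rp: "r > 0"
  proof (rule ccontr)
    assume "\<not> r > 0"
    hence "(ln x)^2 * r \<le> 0" by (simp add: mult_nonneg_nonpos)
    thus False using P2' bp by linarith
  qed
  have a0: "160000000 * (ln x)^2 \<le> L * x"
  proof -
    have "160000000 * (ln x)^2 \<le> 230258 * (700 * (ln x)^2)" by simp
    also have "\<dots> \<le> L * x" using L xt by (intro mult_mono) auto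
    finally show ?thesis .
  qed
  have m: "160000000 * (ln x)^2 * r \<le> L * x * r" using mult_right_mono[OF a0, of r] rp by simp
  have m2: "160000000 * ((ln x)^2 * r) = 160000000 * (ln x)^2 * r" by (simp add: mult.assoc)
  have key: "2 * b < L * x * r" using P2' m m2 by linarith
  have "E k x \<le> 2 / x * (b / D)" using Ele BB by simp
  also have "\<dots> = (2 * b) / (x * D)" by (simp add: field_simps)
  also have "\<dots> < (L * x * r) / (x * D)"
    using key xp Dp by (intro divide_strict_right_mono) auto
  also have "\<dots> = L * H k x - fact (k - 1) * L / (x ^ k * ln x ^ 2)"
  proof -
    have "ln x ^ (k + 1) = ln x ^ 2 * ln x ^ (k - 1)" using k
      by (simp flip: power_add)
    then show ?thesis using xp tp Dp HQ by (simp add: D_def r_def field_simps)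
  qed
  finally show ?thesis using dec by linarith
qed

lemma main_d:
  assumes k: "2 \<le> k" "k \<le> 6" and x: "x \<ge> 10^5"  and L: "L > 0"
    and P3: "Q k (ln x) \<le> tau k * (ln x)^(k - 1)"
  shows "L * H k x \<le> tau k * L / (x ^ k * ln x ^ 2)"
proof -
  have xp: "x > 1" using x by simp
  have tp: "ln x > 0" using xp by simp
  have e: "ln x ^ (k + 1) = ln x ^ 2 * ln x ^ (k - 1)" using k
    by (simp flip: power_add)
  have "H k x = Q k (ln x) / (x ^ k * ln x ^ 2 * ln x ^ (k - 1))" unfolding H_def e by (simp add: mult.assoc)
  also have "\<dots> \<le> tau k * (ln x)^(k - 1) / (x ^ k * ln x ^ 2 * ln x ^ (k - 1))"
    using P3 xp tp by (intro divide_right_mono) auto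
  also have "\<dots> = tau k / (x ^ k * ln x ^ 2)" using xp tp by (simp add: field_simps)
  finally have "H k x \<le> tau k / (x ^ k * ln x ^ 2)" .
  hence "L * H k x \<le> L * (tau k / (x ^ k * ln x ^ 2))" using L by (intro mult_left_mono) auto
  thus ?thesis by (simp add: mult.commute)
qed

lemma P1_all: "1 \<le> k \<Longrightarrow> k \<le> 6 \<Longrightarrow> (t::real) \<ge> 11 \<Longrightarrow> 2 * Bp k t < 161 * (t^2 * Q k t)"
proof -
  assume "1 \<le> k" "k \<le> 6" "t \<ge> 11"
  then have "k = 1 \<or> k = 2 \<or> k = 3 \<or> k = 4 \<or> k = 5 \<or> k = 6" by auto
  then show ?thesis using \<open>t \<ge> 11\<close>
    by (elim disjE) (insert P1_1[of t] P1_2[of t] P1_3[of t] P1_4[of t] P1_5[of t] P1_6[of t], simp_all)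
qed

lemma P2_all: "2 \<le> k \<Longrightarrow> k \<le> 6 \<Longrightarrow> (t::real) \<ge> 11 \<Longrightarrow>
   2 * Bp k t < 160000000 * (t^2 * (Q k t - fact (k - 1) * t^(k - 1)))"
proof -
  assume "2 \<le> k" "k \<le> 6" "t \<ge> 11"
  then have "k = 2 \<or> k = 3 \<or> k = 4 \<or> k = 5 \<or> k = 6" by auto
  then show ?thesis using \<open>t \<ge> 11\<close> by (elim disjE) (insert P2_2[of t] P2_3[of t] P2_4[of t] P2_5[of t] P2_6[of t], simp_all)
qed

lemma P3_all: "2 \<le> k \<Longrightarrow> k \<le> 6 \<Longrightarrow> (t::real) \<ge> 11.51292 \<Longrightarrow> Q k t \<le> tau k * t^(k - 1)"
proof -
  assume "2 \<le> k" "k \<le> 6" "t \<ge> 11.51292"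
  then have "k = 2 \<or> k = 3 \<or> k = 4 \<or> k = 5 \<or> k = 6" by auto
  then show ?thesis using \<open>t \<ge> 11.51292\<close> by (elim disjE) (insert P3_2[of t] P3_3[of t] P3_4[of t] P3_5[of t] P3_6[of t], simp_all)
qed

lemma part1:
  fixes N x :: real
  assumes N: "N \<ge> 10 ^ 100000" and k: "1 \<le> k" "k \<le> 6" and x: "x \<ge> 10 ^ 5"
  shows "0.999999 * Pkk k (ln x) * ln N / (x ^ k * ln x ^ (k + 1)) < gN k N x \<and>
            gN k N x < Pkk k (ln x) * ln N / (x ^ k * ln x ^ (k + 1))"
proof -
  have L: "ln N \<ge> 230258" by (rule L_lower[OF N])
  have t: "ln x \<ge> 11.51292" by (rule t_lower[OF x])
  have xp: "x > 1" using x by simp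
  have tp: "ln x > 0" using xp by simp
  have g: "gN k N x = G (ln N) k x" using gN_eq[OF k(2) xp] .
  have P1: "2 * Bp k (ln x) < 161 * ((ln x)^2 * Q k (ln x))" using P1_all[OF k, of "ln x"] t by simp
  note m = main_ab[OF k x L P1]
  have e1: "Pkk k (ln x) * ln N / (x ^ k * ln x ^ (k + 1)) = ln N * H k x"
    using k by (simp add: H_def Q_def)
  have e2: "0.999999 * Pkk k (ln x) * ln N / (x ^ k * ln x ^ (k + 1)) = (1 - 1/1000000) * (ln N * H k x)"
    using k by (simp add: H_def Q_def)
  show ?thesis unfolding e1 e2 g using m by simp
qed

lemma part2:
  fixes N x :: real
  assumes N: "N \<ge> 10 ^ 100000" and k: "2 \<le> k" "k \<le> 6" and x: "x \<ge> 10 ^ 5"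
  shows "fact (k - 1) * ln N / (x ^ k * ln x ^ 2) < gN k N x \<and>
            gN k N x < tau k * ln N / (x ^ k * ln x ^ 2)"
proof -
  have k1: "1 \<le> k" using k by simp
  have L: "ln N \<ge> 230258" by (rule L_lower[OF N])
  have t: "ln x \<ge> 11.51292" by (rule t_lower[OF x])
  have xp: "x > 1" using x by simp
  have g: "gN k N x = G (ln N) k x" using gN_eq[OF k(2) xp] .
  have P1: "2 * Bp k (ln x) < 161 * ((ln x)^2 * Q k (ln x))" using P1_all[OF k1 k(2), of "ln x"] t by simp
  have P2: "2 * Bp k (ln x) < 160000000 * ((ln x)^2 * (Q k (ln x) - fact (k - 1) * (ln x)^(k - 1)))"
    using P2_all[OF k, of "ln x"] t by simp
  have P3: "Q k (ln x) \<le> tau k * (ln x)^(k - 1)" using P3_all[OF k t] .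
  have a: "G (ln N) k x < ln N * H k x" using main_ab(1)[OF k1 k(2) x L P1] .
  have b: "ln N * H k x \<le> tau k * ln N / (x ^ k * ln x ^ 2)" using main_d[OF k x _ P3] L by simp
  have c: "fact (k - 1) * ln N / (x ^ k * ln x ^ 2) < G (ln N) k x" using main_c[OF k x L P2] .
  show ?thesis unfolding g using a b c by linarith
qed

theorem lemma3p1:
  fixes N :: real
  assumes "N \<ge> 10 ^ 100000"
  shows "(\<forall>k::nat. \<forall>x::real. 1 \<le> k \<and> k \<le> 6 \<and> x \<ge> 10 ^ 5 \<longrightarrow>
            0.999999 * Pkk k (ln x) * ln N / (x ^ k * ln x ^ (k + 1)) < gN k N x \<and>
            gN k N x < Pkk k (ln x) * ln N / (x ^ k * ln x ^ (k + 1)))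
       \<and> (\<forall>k::nat. \<forall>x::real. 2 \<le> k \<and> k \<le> 6 \<and> x \<ge> 10 ^ 5 \<longrightarrow>
            fact (k - 1) * ln N / (x ^ k * ln x ^ 2) < gN k N x \<and>
            gN k N x < tau k * ln N / (x ^ k * ln x ^ 2))
       \<and> (\<forall>x::real. x \<ge> 10 ^ 5 \<longrightarrow>
            0.999999 * ln N / (x * ln x ^ 2) < gN 1 N x \<and>
            gN 1 N x < ln N / (x * ln x ^ 2))"
proof (intro conjI allI impI)
  fix k :: nat and x :: real
  assume "1 \<le> k \<and> k \<le> 6 \<and> x \<ge> 10 ^ 5"
  then show "0.999999 * Pkk k (ln x) * ln N / (x ^ k * ln x ^ (k + 1)) < gN k N x"
       "gN k N x < Pkk k (ln x) * ln N / (x ^ k * ln x ^ (k + 1))"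
    using part1[OF assms, of k x] by auto
next
  fix k :: nat and x :: real
  assume "2 \<le> k \<and> k \<le> 6 \<and> x \<ge> 10 ^ 5"
  then show "fact (k - 1) * ln N / (x ^ k * ln x ^ 2) < gN k N x"
       "gN k N x < tau k * ln N / (x ^ k * ln x ^ 2)"
    using part2[OF assms, of k x] by auto
next
  fix x :: real
  assume x: "x \<ge> 10 ^ 5"
  have p: "0.999999 * Pkk 1 (ln x) * ln N / (x ^ 1 * ln x ^ (1 + 1)) < gN 1 N x \<and>
            gN 1 N x < Pkk 1 (ln x) * ln N / (x ^ 1 * ln x ^ (1 + 1))"
    using part1[OF assms _ _ x, of 1] by simp
  then show "0.999999 * ln N / (x * ln x ^ 2) < gN 1 N x" "gN 1 N x < ln N / (x * ln x ^ 2)"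
    by (simp_all add: Pkk_def power2_eq_square)
qed

end
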